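(* Let $S\subset\mathbb{P}^3$ be a smooth cubic surface defined by a cubic form with real coefficients, and let $U_1,U_2$ be self-adjoint determinantal representations of $S$. Then $U_1$ and $U_2$ are equivalent if and only if $U_1$ is hermitean equivalent to either $U_2$ or $-U_2$.
   Context: Work over $\mathbb{C}$. A determinantal representation of $S$ (defined by $F$) is a $3\times3$ matrix of linear forms $U=z_0U_0+\dots+z_3U_3$, $U_i\in\operatorname{Mat}_3(\mathbb{C})$, with $\det U=cF$, $c\neq 0$; it is self-adjoint if each $U_i$ is Hermitian. Two determinantal representations $M,M'$ are equivalent if $M'=XMY$ for some $X,Y\in\operatorname{GL}_3(\mathbb{C})$. Two self-adjoint representations $U,U'$ are hermitean equivalent if $U'=XUX^{\ast}$ for some $X\in\operatorname{GL}_3(\mathbb{C})$. *)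

theory Defs
  imports "HOL-Analysis.Analysis"
begin

definition cubic_form :: "(4 \<Rightarrow> 4 \<Rightarrow> 4 \<Rightarrow> real) \<Rightarrow> complex^4 \<Rightarrow> complex" where
  "cubic_form a z = (\<Sum>i\<in>UNIV. \<Sum>j\<in>UNIV. \<Sum>k\<in>UNIV.
      complex_of_real (a i j k) * z$i * z$j * z$k)"

definition smooth_cubic_surface :: "(complex^4 \<Rightarrow> complex) \<Rightarrow> bool" where
  "smooth_cubic_surface F \<longleftrightarrow>
     (\<forall>z. z \<noteq> 0 \<and> F z = 0 \<longrightarrow> \<not> (F has_derivative (\<lambda>h. 0)) (at z))"

definition lin_matrix :: "(4 \<Rightarrow> complex^3^3) \<Rightarrow> complex^4 \<Rightarrow> complex^3^3" where
  "lin_matrix U z = (\<chi> r s. \<Sum>i\<in>UNIV. z$i * U i $ r $ s)"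

definition det_rep :: "(complex^4 \<Rightarrow> complex) \<Rightarrow> (4 \<Rightarrow> complex^3^3) \<Rightarrow> bool" where
  "det_rep F U \<longleftrightarrow> (\<exists>c. c \<noteq> 0 \<and> (\<forall>z. det (lin_matrix U z) = c * F z))"

definition adjoint3 :: "complex^3^3 \<Rightarrow> complex^3^3" where
  "adjoint3 X = (\<chi> r s. cnj (X $ s $ r))"

definition hermitian3 :: "complex^3^3 \<Rightarrow> bool" where
  "hermitian3 A \<longleftrightarrow> adjoint3 A = A"

definition self_adjoint_det_rep :: "(complex^4 \<Rightarrow> complex) \<Rightarrow> (4 \<Rightarrow> complex^3^3) \<Rightarrow> bool" where
  "self_adjoint_det_rep F U \<longleftrightarrow> det_rep F U \<and> (\<forall>i. hermitian3 (U i))"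

definition rep_equiv :: "(4 \<Rightarrow> complex^3^3) \<Rightarrow> (4 \<Rightarrow> complex^3^3) \<Rightarrow> bool" where
  "rep_equiv M M' \<longleftrightarrow> (\<exists>X Y. invertible X \<and> invertible Y \<and> (\<forall>i. M' i = X ** M i ** Y))"

definition herm_equiv :: "(4 \<Rightarrow> complex^3^3) \<Rightarrow> (4 \<Rightarrow> complex^3^3) \<Rightarrow> bool" where
  "herm_equiv U U' \<longleftrightarrow> (\<exists>X. invertible X \<and> (\<forall>i. U' i = X ** U i ** adjoint3 X))"

end

theory Submission
  imports Defs "HOL-Computational_Algebra.Fundamental_Theorem_Algebra"
begin

lemma lin_matrix_mult_left: "P ** lin_matrix U z = lin_matrix (\<lambda>i. P ** U i) z"
  apply (simp add: vec_eq_iff lin_matrix_def matrix_matrix_mult_def sum_distrib_left)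
  apply (intro allI, rule trans[OF sum.swap])
  apply (simp add: mult.left_commute)
  done
lemma lin_matrix_mult_right: "lin_matrix U z ** Q = lin_matrix (\<lambda>i. U i ** Q) z"
  apply (simp add: vec_eq_iff lin_matrix_def matrix_matrix_mult_def sum_distrib_left sum_distrib_right)
  apply (intro allI, rule trans[OF sum.swap])
  apply (simp add: mult.assoc)
  done
lemma three_idx4: "\<exists>p q::4. p \<noteq> j \<and> q \<noteq> j \<and> p \<noteq> q"
proof -
  have "j = 1 \<or> j = 2 \<or> j = 3 \<or> j = 4" using exhaust_4 by blast
  then show ?thesis
  proof (elim disjE)
    assume "j = 1" then show ?thesis by (intro exI[of _ 2] exI[of _ 3]) simp
  next
    assume "j = 2" then show ?thesis by (intro exI[of _ 1] exI[of _ 3]) simp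
  next
    assume "j = 3" then show ?thesis by (intro exI[of _ 1] exI[of _ 2]) simp
  next
    assume "j = 4" then show ?thesis by (intro exI[of _ 1] exI[of _ 2]) simp
  qed
qed
lemma quad_root:
  fixes A B C :: complex
  assumes "A \<noteq> 0"
  shows "\<exists>s. A * s^2 + B * s + C = 0"
proof -
  define w where "w = csqrt (B^2 - 4*A*C)"
  have w2: "w^2 = B^2 - 4*A*C" unfolding w_def by simp
  define s where "s = (w - B) / (2*A)"
  have "A * s^2 + B * s + C = (w^2 - (B^2 - 4*A*C)) / (4*A)"
    unfolding s_def using assms by (simp add: field_simps power2_eq_square)
  also have "\<dots> = 0" using w2 by simp
  finally show ?thesis by blast
qed
lemma lin_der: "((\<lambda>z::complex^4. \<Sum>i\<in>UNIV. z$i * b i) has_derivative (\<lambda>z. \<Sum>i\<in>UNIV. z$i * b i)) (at x)"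
  by (intro has_derivative_sum has_derivative_mult_left bounded_linear_imp_has_derivative bounded_linear_vec_nth)

lemma lin_comb: "(\<Sum>i\<in>UNIV. (t *s u + v)$i * b i) = t * (\<Sum>i\<in>UNIV. u$i * b i) + (\<Sum>i\<in>UNIV. (v::complex^4)$i * b i)"
  by (simp add: sum.distrib sum_distrib_left algebra_simps)

lemma sum_axis: "(\<Sum>i\<in>UNIV. (axis p (1::complex) :: complex^4)$i * b i) = b p"
proof -
  have "\<forall>i. (axis p (1::complex) :: complex^4)$i * b i = (if p = i then b i else 0)" by (simp add: axis_def)
  then show ?thesis by simp
qed

lemma lin_diff: "(\<Sum>i\<in>UNIV. (c *s x - d *s y)$i * b i) = c * (\<Sum>i\<in>UNIV. x$i * b i) - d * (\<Sum>i\<in>UNIV. (y::complex^4)$i * b i)"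
  by (simp add: sum_subtractf sum_distrib_left algebra_simps)

lemma kernel_pair:
  fixes b :: "4 \<Rightarrow> complex"
  shows "\<exists>u v::complex^4. u \<noteq> 0 \<and> (\<Sum>i\<in>UNIV. u$i * b i) = 0 \<and> (\<Sum>i\<in>UNIV. v$i * b i) = 0 \<and> (\<forall>t. t *s u + v \<noteq> 0)"
proof (cases "\<forall>i. b i = 0")
  case True
  have "(axis 1 1 :: complex^4) \<noteq> 0" by (simp add: axis_eq_0_iff)
  moreover have "\<forall>t. t *s (axis 1 1) + (axis 2 1::complex^4) \<noteq> 0"
  proof
    fix t
    have "(t *s (axis 1 1) + (axis 2 1::complex^4)) $ 2 = 1" by (simp add: axis_def)
    then show "t *s (axis 1 1) + (axis 2 1::complex^4) \<noteq> 0" by (metis zero_index zero_neq_one)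
  qed
  moreover have "\<forall>w::complex^4. (\<Sum>i\<in>UNIV. w$i * b i) = 0" using True by simp
  ultimately show ?thesis by blast
next
  case False
  then obtain j where bj: "b j \<noteq> 0" by auto
  obtain p q :: 4 where pq: "p \<noteq> j" "q \<noteq> j" "p \<noteq> q" using three_idx4 by blast
  define u :: "complex^4" where "u = b j *s axis p 1 - b p *s axis j 1"
  define v :: "complex^4" where "v = b j *s axis q 1 - b q *s axis j 1"
  have "u $ p = b j" using pq by (simp add: u_def axis_def)
  then have "u \<noteq> 0" using bj by auto
  moreover have "(\<Sum>i\<in>UNIV. u$i * b i) = 0"
    unfolding u_def lin_diff sum_axis by simp
  moreover have "(\<Sum>i\<in>UNIV. v$i * b i) = 0"
    unfolding v_def lin_diff sum_axis by simp
  moreover have "\<forall>t. t *s u + v \<noteq> 0"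
  proof
    fix t
    have "(t *s u + v) $ q = b j" using pq by (simp add: u_def v_def axis_def)
    then show "t *s u + v \<noteq> 0" using bj by (metis zero_index)
  qed
  ultimately show ?thesis by blast
qed
lemma reducible_singular:
  fixes N :: "4 \<Rightarrow> complex^3^3" and F :: "complex^4 \<Rightarrow> complex"
  assumes col: "\<forall>i. N i $ 2 $ 1 = 0 \<and> N i $ 3 $ 1 = 0"
    and rep: "\<forall>z. det (lin_matrix N z) = c * F z" and c0: "c \<noteq> 0"
  shows "\<not> smooth_cubic_surface F"
proof
  assume sm: "smooth_cubic_surface F"
  define l where "l r s z = (\<Sum>i\<in>UNIV. (z::complex^4)$i * N i $ r $ s)" for r s z
  define q where "q z = l 2 2 z * l 3 3 z - l 2 3 z * l 3 2 z" for z
  have l21: "l 2 1 z = 0" "l 3 1 z = 0" for z using col by (simp_all add: l_def)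
  have Fz: "F z = inverse c * (l 1 1 z * q z)" for z
  proof -
    have "c * F z = det (lin_matrix N z)" using rep by simp
    also have "\<dots> = l 1 1 z * q z"
      unfolding det_3 q_def using l21[of z] by (simp add: lin_matrix_def l_def[symmetric] algebra_simps)
    finally show ?thesis using c0 by (simp add: field_simps)
  qed
  have Feq: "F = (\<lambda>z. inverse c * (l 1 1 z * q z))" using Fz by auto
  have lin: "l r s (t *s u + v) = t * l r s u + l r s v" for r s t u v
    unfolding l_def by (rule lin_comb)
  have der: "(l r s has_derivative l r s) (at z)" for r s z
    unfolding l_def[abs_def] by (rule lin_der)
  obtain u v where uv: "u \<noteq> 0" "l 1 1 u = 0" "l 1 1 v = 0" "\<forall>t. t *s u + v \<noteq> 0"
    using kernel_pair[of "\<lambda>i. N i $ 1 $ 1"] unfolding l_def by blast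
  have "\<exists>z. z \<noteq> 0 \<and> l 1 1 z = 0 \<and> q z = 0"
  proof (cases "q u = 0")
    case True then show ?thesis using uv by blast
  next
    case False
    define m where "m = l 2 2 u * l 3 3 v + l 2 2 v * l 3 3 u - l 2 3 u * l 3 2 v - l 2 3 v * l 3 2 u"
    have qexp: "q (t *s u + v) = q u * t^2 + m * t + q v" for t
      unfolding q_def m_def lin by (simp add: algebra_simps power2_eq_square)
    obtain t where "q u * t^2 + m * t + q v = 0" using quad_root[OF False] by blast
    then have "q (t *s u + v) = 0" using qexp by simp
    moreover have "l 1 1 (t *s u + v) = 0" using lin uv by simp
    ultimately show ?thesis using uv by blast
  qed
  then obtain z where z: "z \<noteq> 0" "l 1 1 z = 0" "q z = 0" by blast
  have dq: "(q has_derivative (\<lambda>h. (l 2 2 z * l 3 3 h + l 2 2 h * l 3 3 z) - (l 2 3 z * l 3 2 h + l 2 3 h * l 3 2 z))) (at z)"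
    unfolding q_def[abs_def] by (intro has_derivative_diff has_derivative_mult der)
  have "((\<lambda>z. inverse c * (l 1 1 z * q z)) has_derivative (\<lambda>h. inverse c * (l 1 1 z * ((l 2 2 z * l 3 3 h + l 2 2 h * l 3 3 z) - (l 2 3 z * l 3 2 h + l 2 3 h * l 3 2 z)) + l 1 1 h * q z))) (at z)"
    by (intro has_derivative_mult_right has_derivative_mult der dq)
  then have "(F has_derivative (\<lambda>h. 0)) (at z)"
    unfolding Feq by (rule has_derivative_eq_rhs) (use z in \<open>simp add: fun_eq_iff\<close>)
  moreover have "F z = 0" using Fz z by simp
  ultimately show False using sm z unfolding smooth_cubic_surface_def by blast
qed
definition crs :: "complex^3 \<Rightarrow> complex^3 \<Rightarrow> complex^3" where
"crs a b = vector [a$2*b$3 - a$3*b$2, a$3*b$1 - a$1*b$3, a$1*b$2 - a$2*b$1]"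

definition adjcol :: "complex^3^3 \<Rightarrow> 3 \<Rightarrow> complex^3" where
"adjcol C t = (if t = 1 then crs (C$2) (C$3) else if t = 2 then crs (C$3) (C$1) else crs (C$1) (C$2))"

lemma adjcol_mult: "(C *v adjcol C t) $ r = (if r = t then det C else 0)"
proof -
  have "t = 1 \<or> t = 2 \<or> t = 3" "r = 1 \<or> r = 2 \<or> r = 3" using exhaust_3 by blast+
  then show ?thesis
    apply (elim disjE)
    apply (simp_all add: adjcol_def crs_def matrix_vector_mult_def sum_3 det_3 algebra_simps)
    done
qed

lemma crs_par:
  assumes a: "a$1*y$1 + a$2*y$2 + a$3*y$3 = 0" and b: "b$1*y$1 + b$2*y$2 + b$3*y$3 = 0"
  shows "y$r * crs a b $ s = y$s * crs a b $ r"
proof -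
  have i1: "y$1 * crs a b $ 2 - y$2 * crs a b $ 1 = a$3 * (b$1*y$1 + b$2*y$2 + b$3*y$3) - b$3 * (a$1*y$1 + a$2*y$2 + a$3*y$3)"
    by (simp add: crs_def algebra_simps)
  have i2: "y$1 * crs a b $ 3 - y$3 * crs a b $ 1 = b$2 * (a$1*y$1 + a$2*y$2 + a$3*y$3) - a$2 * (b$1*y$1 + b$2*y$2 + b$3*y$3)"
    by (simp add: crs_def algebra_simps)
  have i3: "y$2 * crs a b $ 3 - y$3 * crs a b $ 2 = a$1 * (b$1*y$1 + b$2*y$2 + b$3*y$3) - b$1 * (a$1*y$1 + a$2*y$2 + a$3*y$3)"
    by (simp add: crs_def algebra_simps)
  have j: "y$1 * crs a b $ 2 = y$2 * crs a b $ 1" "y$1 * crs a b $ 3 = y$3 * crs a b $ 1" "y$2 * crs a b $ 3 = y$3 * crs a b $ 2"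
    using i1 i2 i3 a b by simp_all
  have "r = 1 \<or> r = 2 \<or> r = 3" "s = 1 \<or> s = 2 \<or> s = 3" using exhaust_3 by blast+
  then show ?thesis using j by (elim disjE) simp_all
qed

lemma adjcol_par:
  assumes "C *v y = 0"
  shows "y$r * adjcol C t $ s = y$s * adjcol C t $ r"
proof -
  have e: "C$1$1 * y$1 + C$1$2 * y$2 + C$1$3 * y$3 = 0"
          "C$2$1 * y$1 + C$2$2 * y$2 + C$2$3 * y$3 = 0"
          "C$3$1 * y$1 + C$3$2 * y$2 + C$3$3 * y$3 = 0"
    using assms by (simp_all add: vec_eq_iff forall_3 matrix_vector_mult_def sum_3)
  show ?thesis unfolding adjcol_def using crs_par[OF e(2) e(3)] crs_par[OF e(3) e(1)] crs_par[OF e(1) e(2)] by simp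
qed

lemma adjcol_zero:
  assumes "\<forall>t. adjcol C t = 0"
  shows "C$r$s * C$r0$s0 = C$r0$s * C$r$s0"
proof -
  have z: "C$2$2*C$3$3 = C$2$3*C$3$2" "C$2$3*C$3$1 = C$2$1*C$3$3" "C$2$1*C$3$2 = C$2$2*C$3$1"
    "C$3$2*C$1$3 = C$3$3*C$1$2" "C$3$3*C$1$1 = C$3$1*C$1$3" "C$3$1*C$1$2 = C$3$2*C$1$1"
    "C$1$2*C$2$3 = C$1$3*C$2$2" "C$1$3*C$2$1 = C$1$1*C$2$3" "C$1$1*C$2$2 = C$1$2*C$2$1"
    using assms[rule_format, of 1] assms[rule_format, of 2] assms[rule_format, of 3]
    by (simp_all add: adjcol_def crs_def vec_eq_iff forall_3)
  have "r = 1 \<or> r = 2 \<or> r = 3" "s = 1 \<or> s = 2 \<or> s = 3" "r0 = 1 \<or> r0 = 2 \<or> r0 = 3" "s0 = 1 \<or> s0 = 2 \<or> s0 = 3" using exhaust_3 by blast+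
  then show ?thesis
    using z by (elim disjE) (simp_all add: mult.commute)
qed
lemma extend_basis:
  fixes k :: "complex^3"
  assumes "k \<noteq> 0"
  shows "\<exists>Q::complex^3^3. invertible Q \<and> (\<forall>r. Q$r$1 = k$r)"
proof -
  have "k$1 \<noteq> 0 \<or> k$2 \<noteq> 0 \<or> k$3 \<noteq> 0"
    using assms by (metis vec_eq_iff zero_index exhaust_3)
  then consider "k$1 \<noteq> 0" | "k$1 = 0" "k$2 \<noteq> 0" | "k$1 = 0" "k$2 = 0" "k$3 \<noteq> 0" by blast
  then show ?thesis
  proof cases
    case 1
    define Q :: "complex^3^3" where "Q = (\<chi> r s. if s = 1 then k$r else if r = s then 1 else 0)"
    have "det Q = k$1" unfolding det_3 Q_def by simp
    then show ?thesis using 1 by (intro exI[of _ Q]) (simp add: invertible_det_nz Q_def)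
  next
    case 2
    define Q :: "complex^3^3" where "Q = (\<chi> r s. if s = 1 then k$r else if s = 2 then (if r = 1 then 1 else 0) else (if r = 3 then 1 else 0))"
    have "det Q = - k$2" unfolding det_3 Q_def using 2 by simp
    then show ?thesis using 2 by (intro exI[of _ Q]) (simp add: invertible_det_nz Q_def)
  next
    case 3
    define Q :: "complex^3^3" where "Q = (\<chi> r s. if s = 1 then k$r else if s = 2 then (if r = 1 then 1 else 0) else (if r = 2 then 1 else 0))"
    have "det Q = k$3" unfolding det_3 Q_def using 3 by simp
    then show ?thesis using 3 by (intro exI[of _ Q]) (simp add: invertible_det_nz Q_def)
  qed
qed

lemma mv_axis1: "((M::complex^3^3) *v axis 1 1) $ r = M$r$1"
proof -
  have "\<forall>j. M$r$j * (axis 1 1 :: complex^3)$j = (if 1 = j then M$r$j else 0)" by (simp add: axis_def)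
  then show ?thesis by (simp add: matrix_vector_mult_def)
qed

lemma mv_smult: "(A::complex^3^3) *v (c *s x) = c *s (A *v x)"
  by (simp add: vec_eq_iff matrix_vector_mult_def sum_distrib_left algebra_simps)

lemma common_eigvec_singular:
  fixes N :: "4 \<Rightarrow> complex^3^3" and F :: "complex^4 \<Rightarrow> complex"
  assumes rep: "det_rep F N" and k0: "k \<noteq> 0" and eig: "\<forall>i. N i *v k = \<nu> i *s k"
  shows "\<not> smooth_cubic_surface F"
proof -
  obtain c where c0: "c \<noteq> 0" and cF: "\<forall>z. det (lin_matrix N z) = c * F z"
    using rep unfolding det_rep_def by blast
  obtain Q :: "complex^3^3" where Qi: "invertible Q" and Qk: "\<forall>r. Q$r$1 = k$r"
    using extend_basis[OF k0] by blast
  obtain Q' where QQ': "Q ** Q' = mat 1" and Q'Q: "Q' ** Q = mat 1"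
    using Qi unfolding invertible_def by blast
  define N' where "N' i = Q' ** N i ** Q" for i
  have Qe: "Q *v axis 1 1 = k" using Qk by (simp add: vec_eq_iff mv_axis1)
  have Q'k: "Q' *v k = axis 1 1"
    unfolding Qe[symmetric] by (simp add: matrix_vector_mul_assoc Q'Q)
  have col: "N' i *v axis 1 1 = \<nu> i *s axis 1 1" for i
  proof -
    have "N' i *v axis 1 1 = Q' *v (N i *v (Q *v axis 1 1))"
      by (simp add: N'_def matrix_vector_mul_assoc matrix_mul_assoc)
    also have "\<dots> = \<nu> i *s axis 1 1" using eig by (simp add: Qe mv_smult Q'k)
    finally show ?thesis .
  qed
  have colz: "\<forall>i. N' i $ 2 $ 1 = 0 \<and> N' i $ 3 $ 1 = 0"
  proof
    fix i
    have "N' i $ 2 $ 1 = (\<nu> i *s axis 1 1 :: complex^3) $ 2" "N' i $ 3 $ 1 = (\<nu> i *s axis 1 1 :: complex^3) $ 3"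
      using col[of i] by (metis mv_axis1)+
    then show "N' i $ 2 $ 1 = 0 \<and> N' i $ 3 $ 1 = 0" by (simp add: axis_def)
  qed
  have "det (lin_matrix N' z) = c * F z" for z
  proof -
    have "lin_matrix N' z = Q' ** lin_matrix N z ** Q"
      unfolding N'_def lin_matrix_mult_left lin_matrix_mult_right by simp
    then have "det (lin_matrix N' z) = det Q' * det (lin_matrix N z) * det Q"
      by (simp add: det_mul)
    also have "\<dots> = det (Q' ** Q) * det (lin_matrix N z)" by (simp add: det_mul)
    finally show ?thesis using Q'Q cF by simp
  qed
  then show ?thesis using reducible_singular[OF colz _ c0] by blast
qed
lemma eigval_exists:
  fixes B :: "complex^3^3"
  shows "\<exists>x. det (B - mat x) = 0"
proof -
  define p where "p = [: det B, - (B$1$1*B$2$2 - B$1$2*B$2$1 + B$1$1*B$3$3 - B$1$3*B$3$1 + B$2$2*B$3$3 - B$2$3*B$3$2), B$1$1 + B$2$2 + B$3$3, -1 :]"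
  have "\<exists>x. poly p x = 0"
    by (rule fundamental_theorem_of_algebra_alt) (simp add: p_def)
  then obtain x where "poly p x = 0" by blast
  moreover have "det (B - mat x) = poly p x"
    unfolding p_def det_3[of "B - mat x"] det_3[of B] by (simp add: mat_def algebra_simps power2_eq_square power3_eq_cube)
  ultimately show ?thesis by auto
qed
lemma comm_shift:
  fixes A B :: "complex^3^3"
  assumes "B ** A = A ** B"
  shows "(B - mat x) ** A = A ** (B - mat x)"
proof -
  have h: "(\<Sum>k\<in>UNIV. B$r$k * A$k$s) = (\<Sum>k\<in>UNIV. A$r$k * B$k$s)" for r s
    using assms by (simp add: vec_eq_iff matrix_matrix_mult_def)
  show ?thesis
    using h by (simp add: vec_eq_iff matrix_matrix_mult_def mat_def sum_3 algebra_simps forall_3)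
qed

lemma mv_axis: "((M::complex^3^3) *v axis j 1) $ r = M$r$j"
proof -
  have "\<forall>l. M$r$l * (axis j 1 :: complex^3)$l = (if j = l then M$r$l else 0)" by (simp add: axis_def)
  then show ?thesis by (simp add: matrix_vector_mult_def)
qed

lemma parallel_vec:
  fixes y k :: "complex^3"
  assumes "k$s \<noteq> 0" "\<forall>r. y$r * k$s = y$s * k$r"
  shows "y = (y$s / k$s) *s k"
  using assms by (simp add: vec_eq_iff field_simps)

lemma common_eigvec:
  fixes C :: "complex^3^3" and N :: "4 \<Rightarrow> complex^3^3"
  assumes C0: "C \<noteq> 0" and dC: "det C = 0" and comm: "\<forall>i. C ** N i = N i ** C"
  shows "\<exists>k. k \<noteq> 0 \<and> (\<exists>\<nu>. \<forall>i. N i *v k = \<nu> i *s k)"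
proof -
  have "\<exists>k s. k$s \<noteq> 0 \<and> (\<forall>i r. (N i *v k)$r * k$s = (N i *v k)$s * k$r)"
  proof (cases "\<exists>t. adjcol C t \<noteq> 0")
    case True
    then obtain t where t: "adjcol C t \<noteq> 0" by blast
    define k where "k = adjcol C t"
    have "\<exists>s. k$s \<noteq> 0" using t unfolding k_def by (simp add: vec_eq_iff)
    then obtain s where s: "k$s \<noteq> 0" by blast
    have "(C *v k)$r = 0" for r unfolding k_def adjcol_mult using dC by simp
    then have Ck: "C *v k = 0" by (simp add: vec_eq_iff)
    have "C *v (N i *v k) = 0" for i
    proof -
      have "C *v (N i *v k) = (C ** N i) *v k" by (simp add: matrix_vector_mul_assoc)
      also have "\<dots> = N i *v (C *v k)" using comm by (simp add: matrix_vector_mul_assoc)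
      finally show ?thesis using Ck by simp
    qed
    then have "(N i *v k)$r * k$s = (N i *v k)$s * k$r" for i r
      unfolding k_def by (rule adjcol_par)
    then show ?thesis using s by (intro exI[of _ k] exI[of _ s]) simp
  next
    case False
    then have az: "\<forall>t. adjcol C t = 0" by blast
    have "\<exists>r0 s0. C$r0$s0 \<noteq> 0" using C0 by (simp add: vec_eq_iff)
    then obtain r0 s0 where rs0: "C$r0$s0 \<noteq> 0" by blast
    define k where "k = C *v axis s0 1"
    have kr: "k$r = C$r$s0" for r unfolding k_def by (rule mv_axis)
    have "(N i *v k)$r * k$r0 = (N i *v k)$r0 * k$r" for i r
    proof -
      define w where "w = N i *v axis s0 1"
      have "N i *v k = C *v w"
        unfolding k_def w_def using comm by (simp add: matrix_vector_mul_assoc)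
      moreover have "(C *v w)$r * C$r0$s0 = (C *v w)$r0 * C$r$s0"
      proof -
        have "(C *v w)$r * C$r0$s0 = (\<Sum>l\<in>UNIV. C$r$l * w$l * C$r0$s0)"
          by (simp add: matrix_vector_mult_def sum_distrib_right)
        also have "\<dots> = (\<Sum>l\<in>UNIV. C$r0$l * w$l * C$r$s0)"
        proof (rule sum.cong)
          fix l
          have "C$r$l * C$r0$s0 = C$r0$l * C$r$s0" by (rule adjcol_zero[OF az])
          have "C$r$l * w$l * C$r0$s0 = (C$r$l * C$r0$s0) * w$l" by (simp add: ac_simps)
          also have "\<dots> = (C$r0$l * C$r$s0) * w$l" by (simp add: \<open>C$r$l * C$r0$s0 = C$r0$l * C$r$s0\<close>)
          also have "\<dots> = C$r0$l * w$l * C$r$s0" by (simp add: ac_simps)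
          finally show "C$r$l * w$l * C$r0$s0 = C$r0$l * w$l * C$r$s0" .
        qed simp
        also have "\<dots> = (C *v w)$r0 * C$r$s0"
          by (simp add: matrix_vector_mult_def sum_distrib_right)
        finally show ?thesis .
      qed
      ultimately show ?thesis using kr by simp
    qed
    moreover have "k$r0 \<noteq> 0" using kr rs0 by simp
    ultimately show ?thesis by (intro exI[of _ k] exI[of _ r0]) simp
  qed
  then obtain k s where ks: "k$s \<noteq> 0" and par: "\<forall>i r. (N i *v k)$r * k$s = (N i *v k)$s * k$r" by blast
  have nu0: "N i *v k = ((N i *v k)$s / k$s) *s k" for i
    by (rule parallel_vec[OF ks]) (use par in blast)
  show ?thesis
  proof (intro exI[of _ k] conjI)
    show "k \<noteq> 0" using ks by (metis zero_index)
    show "\<exists>\<nu>. \<forall>i. N i *v k = \<nu> i *s k" by (rule exI[of _ "\<lambda>i. (N i *v k)$s / k$s"], intro allI, rule nu0)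
  qed
qed

lemma commute_scalar:
  fixes N :: "4 \<Rightarrow> complex^3^3" and F :: "complex^4 \<Rightarrow> complex"
  assumes rep: "det_rep F N" and sm: "smooth_cubic_surface F" and comm: "\<forall>i. B ** N i = N i ** B"
  shows "\<exists>x. B = mat x"
proof -
  obtain x where dx: "det (B - mat x) = 0" using eigval_exists by blast
  show ?thesis
  proof (cases "B - mat x = 0")
    case True then have "B = mat x" by simp
    then show ?thesis by blast
  next
    case False
    have "\<forall>i. (B - mat x) ** N i = N i ** (B - mat x)" using comm comm_shift by blast
    then obtain k \<nu> where "k \<noteq> 0" "\<forall>i. N i *v k = \<nu> i *s k"
      using common_eigvec[OF False dx] by blast
    then have "\<not> smooth_cubic_surface F" using common_eigvec_singular[OF rep] by blast
    then show ?thesis using sm by blast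
  qed
qed
lemma mat_comm: "(A::complex^3^3) ** mat x = mat x ** A"
  by (simp add: vec_eq_iff matrix_matrix_mult_def mat_def sum_3 forall_3 mult.commute)

lemma mat_mat: "(mat x :: complex^3^3) ** mat y = mat (x * y)"
  by (simp add: vec_eq_iff matrix_matrix_mult_def mat_def sum_3 forall_3)

lemma neg_mat: "- (A::complex^3^3) = mat (-1) ** A"
  by (simp add: vec_eq_iff matrix_matrix_mult_def mat_def sum_3 forall_3)

lemma adj_mult: "adjoint3 (A ** B) = adjoint3 B ** adjoint3 A"
  by (simp add: vec_eq_iff adjoint3_def matrix_matrix_mult_def mult.commute)

lemma adj_adj: "adjoint3 (adjoint3 A) = A"
  by (simp add: vec_eq_iff adjoint3_def)

lemma adj_mat: "adjoint3 (mat x) = mat (cnj x)"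
  by (simp add: vec_eq_iff adjoint3_def mat_def)

lemma mat_inj:
  assumes "(mat x :: complex^3^3) = mat y" shows "x = y"
proof -
  have "(mat x :: complex^3^3)$1$1 = (mat y :: complex^3^3)$1$1" using assms by simp
  then show ?thesis by (simp add: mat_def)
qed

lemma not_invertible_0: "\<not> invertible (0::complex^3^3)"
  unfolding invertible_det_nz by (simp add: det_3)

lemma F_nonzero:
  assumes sm: "smooth_cubic_surface F"
  shows "\<exists>z. F z \<noteq> 0"
proof (rule ccontr)
  assume "\<not> (\<exists>z. F z \<noteq> 0)"
  then have F0: "F = (\<lambda>_. 0)" by auto
  have "(axis 1 1 :: complex^4) \<noteq> 0" by (simp add: axis_eq_0_iff)
  moreover have "(F has_derivative (\<lambda>h. 0)) (at (axis 1 1))" unfolding F0 by simp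
  ultimately show False using sm F0 unfolding smooth_cubic_surface_def by auto
qed

lemma intertwine_scalar:
  fixes M :: "4 \<Rightarrow> complex^3^3" and F :: "complex^4 \<Rightarrow> complex"
  assumes rep: "det_rep F M" and sm: "smooth_cubic_surface F" and AB: "\<forall>i. A ** M i = M i ** B"
  shows "\<exists>x. A = mat x \<and> B = mat x"
proof -
  obtain c where c0: "c \<noteq> 0" and cF: "\<forall>z. det (lin_matrix M z) = c * F z"
    using rep unfolding det_rep_def by blast
  obtain z0 where Fz0: "F z0 \<noteq> 0" using F_nonzero[OF sm] by blast
  define L0 where "L0 = lin_matrix M z0"
  have "det L0 \<noteq> 0" unfolding L0_def using cF c0 Fz0 by simp
  then obtain L0' where LL': "L0 ** L0' = mat 1" and L'L: "L0' ** L0 = mat 1"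
    unfolding invertible_det_nz[symmetric] invertible_def by blast
  have AL: "A ** L0 = L0 ** B"
    unfolding L0_def lin_matrix_mult_left lin_matrix_mult_right using AB by simp
  have L'A: "L0' ** A = B ** L0'"
  proof -
    have "L0' ** A = L0' ** A ** (L0 ** L0')" using LL' by simp
    also have "\<dots> = L0' ** (A ** L0) ** L0'" by (simp add: matrix_mul_assoc)
    also have "\<dots> = (L0' ** L0) ** B ** L0'" using AL by (simp add: matrix_mul_assoc)
    finally show ?thesis using L'L by simp
  qed
  define N where "N i = L0' ** M i" for i
  have dL': "det L0' \<noteq> 0"
    using L'L det_mul[of L0' L0] by (metis det_I mult_zero_left zero_neq_one)
  have "det_rep F N" unfolding det_rep_def
  proof (intro exI[of _ "det L0' * c"] conjI allI)
    show "det L0' * c \<noteq> 0" using dL' c0 by simp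
    fix z
    have "lin_matrix N z = L0' ** lin_matrix M z"
      unfolding N_def lin_matrix_mult_left by simp
    then show "det (lin_matrix N z) = det L0' * c * F z" using cF by (simp add: det_mul)
  qed
  moreover have "\<forall>i. B ** N i = N i ** B"
  proof
    fix i
    have "B ** N i = (B ** L0') ** M i" unfolding N_def by (simp add: matrix_mul_assoc)
    also have "\<dots> = L0' ** (A ** M i)" using L'A by (simp add: matrix_mul_assoc)
    also have "\<dots> = N i ** B" unfolding N_def using AB by (simp add: matrix_mul_assoc)
    finally show "B ** N i = N i ** B" .
  qed
  ultimately obtain x where Bx: "B = mat x" using commute_scalar[OF _ sm] by blast
  have "A = A ** (L0 ** L0')" using LL' by simp
  also have "\<dots> = L0 ** mat x ** L0'" using AL Bx by (simp add: matrix_mul_assoc)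
  also have "\<dots> = mat x ** (L0 ** L0')" by (simp add: mat_comm matrix_mul_assoc)
  also have "\<dots> = mat x" using LL' by simp
  finally show ?thesis using Bx by blast
qed
lemma mat_pull:
  fixes B C D :: "complex^3^3"
  shows "mat a ** B ** C ** (D ** mat b) = mat (a*b) ** (B ** C ** D)"
proof -
  have "mat a ** B ** C ** (D ** mat b) = mat a ** ((B ** C ** D) ** mat b)"
    by (simp add: matrix_mul_assoc)
  also have "\<dots> = mat a ** (mat b ** (B ** C ** D))" by (simp only: mat_comm)
  also have "\<dots> = mat (a*b) ** (B ** C ** D)" by (simp only: matrix_mul_assoc mat_mat)
  finally show ?thesis .
qed

lemma adj_one: "adjoint3 (mat 1) = mat 1"
  by (simp add: adj_mat)

lemma mat_mid:
  fixes B C D :: "complex^3^3"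
  shows "B ** (mat c ** C) ** D = mat c ** (B ** C ** D)"
proof -
  have "B ** (mat c ** C) ** D = (B ** mat c) ** C ** D" by (simp add: matrix_mul_assoc)
  also have "\<dots> = (mat c ** B) ** C ** D" by (simp only: mat_comm)
  finally show ?thesis by (simp add: matrix_mul_assoc)
qed

lemma core:
  fixes V W :: "4 \<Rightarrow> complex^3^3" and F :: "complex^4 \<Rightarrow> complex"
  assumes repV: "det_rep F V" and sm: "smooth_cubic_surface F"
    and hV: "\<forall>i. hermitian3 (V i)" and hW: "\<forall>i. hermitian3 (W i)"
    and Xi: "invertible X" and Yi: "invertible Y" and WXY: "\<forall>i. W i = X ** V i ** Y"
  shows "\<exists>P. invertible P \<and> ((\<forall>i. W i = P ** V i ** adjoint3 P) \<or> (\<forall>i. W i = P ** (- V i) ** adjoint3 P))"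
proof -
  obtain Y' where YY': "Y ** Y' = mat 1" and Y'Y: "Y' ** Y = mat 1" using Yi unfolding invertible_def by blast
  have aV: "adjoint3 (V i) = V i" for i using hV unfolding hermitian3_def by blast
  have aW: "adjoint3 (W i) = W i" for i using hW unfolding hermitian3_def by blast
  have e: "X ** V i ** Y = adjoint3 Y ** V i ** adjoint3 X" for i
  proof -
    have "adjoint3 (W i) = W i" by (rule aW)
    then have "X ** V i ** Y = adjoint3 (X ** V i ** Y)" using WXY by simp
    also have "\<dots> = adjoint3 Y ** V i ** adjoint3 X" by (simp add: adj_mult aV matrix_mul_assoc)
    finally show ?thesis .
  qed
  have a1: "adjoint3 Y' ** adjoint3 Y = mat 1"
    by (simp only: adj_mult[symmetric] YY' adj_one)
  have a2: "adjoint3 Y ** adjoint3 Y' = mat 1"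
    by (simp only: adj_mult[symmetric] Y'Y adj_one)
  define B1 where "B1 = adjoint3 Y' ** X"
  have aB1: "adjoint3 B1 = adjoint3 X ** Y'" unfolding B1_def by (simp add: adj_mult adj_adj)
  have "B1 ** V i = V i ** adjoint3 B1" for i
  proof -
    have "B1 ** V i = adjoint3 Y' ** (X ** V i ** (Y ** Y'))" using YY' by (simp add: B1_def matrix_mul_assoc)
    also have "\<dots> = adjoint3 Y' ** ((X ** V i ** Y) ** Y')" by (simp add: matrix_mul_assoc)
    also have "\<dots> = adjoint3 Y' ** ((adjoint3 Y ** V i ** adjoint3 X) ** Y')" by (simp only: e)
    also have "\<dots> = (adjoint3 Y' ** adjoint3 Y) ** V i ** (adjoint3 X ** Y')" by (simp add: matrix_mul_assoc)
    also have "\<dots> = V i ** adjoint3 B1" using a1 aB1 by simp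
    finally show ?thesis .
  qed
  then obtain x where B1x: "B1 = mat x" and aB1x: "adjoint3 B1 = mat x"
    using intertwine_scalar[OF repV sm] by blast
  have "mat (cnj x) = (mat x :: complex^3^3)" using aB1x unfolding B1x adj_mat .
  then have cx: "cnj x = x" by (rule mat_inj)
  have Xeq: "X = adjoint3 Y ** mat x"
  proof -
    have "X = (adjoint3 Y ** adjoint3 Y') ** X" using a2 by simp
    also have "\<dots> = adjoint3 Y ** B1" by (simp add: B1_def matrix_mul_assoc)
    finally show ?thesis using B1x by simp
  qed
  have x0: "x \<noteq> 0"
  proof
    assume "x = 0"
    then have "X = 0" using Xeq by simp
    then show False using Xi not_invertible_0 by simp
  qed
  have Wi: "W i = mat x ** (adjoint3 Y ** V i ** Y)" for i
    using WXY Xeq by (simp add: matrix_mul_assoc mat_comm)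
  have xr: "x = complex_of_real (Re x)" using cx by (simp add: complex_eq_iff)
  define s where "s = complex_of_real (sqrt \<bar>Re x\<bar>)"
  have "Re x \<noteq> 0" using x0 xr by (metis of_real_0)
  then have s0: "s \<noteq> 0" unfolding s_def by simp
  have cs: "cnj s = s" unfolding s_def by simp
  have ss: "s * s = complex_of_real \<bar>Re x\<bar>" unfolding s_def of_real_mult[symmetric] by simp
  define P where "P = mat s ** adjoint3 Y"
  have aP: "adjoint3 P = Y ** mat s" unfolding P_def by (simp add: adj_mult adj_adj adj_mat cs)
  have Pi: "invertible P"
  proof -
    have "P ** (adjoint3 Y' ** mat (inverse s)) = mat s ** (adjoint3 Y ** adjoint3 Y') ** mat (inverse s)"
      by (simp add: P_def matrix_mul_assoc)
    also have "\<dots> = mat 1" using a2 s0 by (simp add: mat_mat)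
    finally show ?thesis unfolding invertible_right_inverse by blast
  qed
  have sand: "P ** A ** adjoint3 P = mat (s * s) ** (adjoint3 Y ** A ** Y)" for A
    unfolding aP unfolding P_def by (simp only: mat_pull)
  show ?thesis
  proof (cases "Re x \<ge> 0")
    case True
    then have "s * s = x" using ss xr[symmetric] by simp
    then have "\<forall>i. W i = P ** V i ** adjoint3 P" using Wi sand by simp
    then show ?thesis using Pi by blast
  next
    case False
    then have "\<bar>Re x\<bar> = - Re x" by simp
    then have "s * s = - x" using ss xr[symmetric] by simp
    have "W i = P ** (- V i) ** adjoint3 P" for i
    proof -
      have "P ** (- V i) ** adjoint3 P = mat (- x) ** (adjoint3 Y ** (mat (-1) ** V i) ** Y)"
        unfolding sand \<open>s * s = - x\<close> neg_mat[of "V i"] ..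
      also have "\<dots> = mat (- x) ** (mat (-1) ** (adjoint3 Y ** V i ** Y))"
        by (simp only: mat_mid)
      also have "\<dots> = W i" unfolding Wi[of i] by (simp add: matrix_mul_assoc mat_mat)
      finally show ?thesis by simp
    qed
    then show ?thesis using Pi by blast
  qed
qed

lemma herm_to_rep:
  assumes Xi: "invertible X" and c: "c * c = 1" and U: "\<forall>i. U1 i = X ** (mat c ** U2 i) ** adjoint3 X"
  shows "rep_equiv U1 U2"
proof -
  obtain X' where XX': "X ** X' = mat 1" and X'X: "X' ** X = mat 1" using Xi unfolding invertible_def by blast
  have a1: "adjoint3 X ** adjoint3 X' = mat 1" by (simp only: adj_mult[symmetric] X'X adj_one)
  have a2: "adjoint3 X' ** adjoint3 X = mat 1" by (simp only: adj_mult[symmetric] XX' adj_one)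
  have P: "invertible (mat c ** X')"
    unfolding invertible_right_inverse
  proof (intro exI[of _ "X ** mat c"])
    have "mat c ** X' ** (X ** mat c) = mat c ** (X' ** X) ** mat c" by (simp add: matrix_mul_assoc)
    also have "\<dots> = mat 1" using X'X c by (simp add: mat_mat)
    finally show "mat c ** X' ** (X ** mat c) = mat 1" .
  qed
  have Q: "invertible (adjoint3 X')" unfolding invertible_def using a1 a2 by blast
  have "U2 i = (mat c ** X') ** U1 i ** adjoint3 X'" for i
  proof -
    have "(mat c ** X') ** U1 i ** adjoint3 X' = mat c ** (X' ** X) ** (mat c ** U2 i) ** (adjoint3 X ** adjoint3 X')"
      using U by (simp add: matrix_mul_assoc)
    also have "\<dots> = U2 i" using X'X a1 c by (simp add: matrix_mul_assoc mat_mat)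
    finally show ?thesis by simp
  qed
  then show ?thesis unfolding rep_equiv_def using P Q by blast
qed

theorem mainTheorem11:
  fixes a :: "4 \<Rightarrow> 4 \<Rightarrow> 4 \<Rightarrow> real" and U1 U2 :: "4 \<Rightarrow> complex^3^3"
  assumes "smooth_cubic_surface (cubic_form a)"
    and "self_adjoint_det_rep (cubic_form a) U1"
    and "self_adjoint_det_rep (cubic_form a) U2"
  shows "rep_equiv U1 U2 \<longleftrightarrow> (herm_equiv U2 U1 \<or> herm_equiv (\<lambda>i. - U2 i) U1)"
proof
  assume "rep_equiv U1 U2"
  then obtain X Y where Xi: "invertible X" and Yi: "invertible Y" and XY: "\<forall>i. U2 i = X ** U1 i ** Y"
    unfolding rep_equiv_def by blast
  obtain X' where XX': "X ** X' = mat 1" and X'X: "X' ** X = mat 1" using Xi unfolding invertible_def by blast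
  obtain Y' where YY': "Y ** Y' = mat 1" and Y'Y: "Y' ** Y = mat 1" using Yi unfolding invertible_def by blast
  have X'i: "invertible X'" unfolding invertible_def using XX' X'X by blast
  have Y'i: "invertible Y'" unfolding invertible_def using YY' Y'Y by blast
  have "U1 i = X' ** U2 i ** Y'" for i
  proof -
    have "X' ** U2 i ** Y' = (X' ** X) ** U1 i ** (Y ** Y')" using XY by (simp add: matrix_mul_assoc)
    then show ?thesis using X'X YY' by simp
  qed
  then obtain P where Pi: "invertible P" and
    PP: "(\<forall>i. U1 i = P ** U2 i ** adjoint3 P) \<or> (\<forall>i. U1 i = P ** (- U2 i) ** adjoint3 P)"
    using core[of "cubic_form a" U2 U1 X' Y'] assms X'i Y'i unfolding self_adjoint_det_rep_def by blast
  then show "herm_equiv U2 U1 \<or> herm_equiv (\<lambda>i. - U2 i) U1"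
    unfolding herm_equiv_def by blast
next
  assume "herm_equiv U2 U1 \<or> herm_equiv (\<lambda>i. - U2 i) U1"
  then show "rep_equiv U1 U2"
  proof
    assume "herm_equiv U2 U1"
    then obtain X where "invertible X" "\<forall>i. U1 i = X ** U2 i ** adjoint3 X" unfolding herm_equiv_def by blast
    then show ?thesis using herm_to_rep[of X 1 U1 U2] by simp
  next
    assume "herm_equiv (\<lambda>i. - U2 i) U1"
    then obtain X where Xi: "invertible X" and U: "\<forall>i. U1 i = X ** (- U2 i) ** adjoint3 X" unfolding herm_equiv_def by blast
    have "\<forall>i. U1 i = X ** (mat (-1) ** U2 i) ** adjoint3 X" using U neg_mat by simp
    then show ?thesis using herm_to_rep[OF Xi, of "-1"] by simp
  qed
qed

end
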